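(* (i) For every integer $n\ge 0$, $D_{n,3}(1,\tfrac14)=\dfrac{3n-1}{2^n}$ in $\mathbb{F}_q$, and for every $y\in\mathbb{F}_{q^2}$ with $y\ne\tfrac12$, $$D_{n,3}(1,y(1-y))=\frac{(2-y)y^n-(y+1)(1-y)^n}{2y-1}.$$ (ii) If $n_1,n_2$ are positive integers with $n_1\equiv n_2\pmod{q^2-1}$, then $D_{n_1,3}(1,x_0)=D_{n_2,3}(1,x_0)$ for every $x_0\in\mathbb{F}_q\setminus\{\tfrac14\}$.
   Context: Let $p>3$ be prime, $q=p^e$ ($e\ge1$), $\mathbb{F}_q$ the field with $q$ elements and $\mathbb{F}_{q^2}$ its quadratic extension. For $n\ge 1$ and $a\in\mathbb{F}_q$, $D_{n,3}(a,x)=\sum_{i=0}^{\lfloor n/2\rfloor}\frac{n-3i}{n-i}\binom{n-i}{i}(-x)^i a^{n-2i}$, where each coefficient $\frac{n-3i}{n-i}\binom{n-i}{i}$ is an integer read modulo $p$; and $D_{0,3}(a,x)=-1$. The polynomial $D_{n,3}(1,x)\in\mathbb{F}_q[x]$ is evaluated at elements of $\mathbb{F}_{q^2}$. *)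

theory Defs
  imports Main "HOL-Number_Theory.Cong"
begin

text \<open>The integer coefficient (n-3i)/(n-i) * binom(n-i, i), for 1 <= n and i <= n div 2.
  The quotient is exact, so integer division computes it.\<close>
definition D3coeff :: "nat \<Rightarrow> nat \<Rightarrow> int" where
  "D3coeff n i = ((int n - 3 * int i) * int ((n - i) choose i)) div int (n - i)"

definition D3 :: "nat \<Rightarrow> 'a::comm_ring_1 \<Rightarrow> 'a \<Rightarrow> 'a" where
  "D3 n a x = (if n = 0 then -1
     else (\<Sum>i\<le>n div 2. of_int (D3coeff n i) * (-x) ^ i * a ^ (n - 2 * i)))"

end

theory Submission imports Defs "HOL-Computational_Algebra.Polynomial" "HOL-Computational_Algebra.Primes"
begin

definition S :: "'a::comm_ring_1 \<Rightarrow> nat \<Rightarrow> 'a" where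
  "S t m = (\<Sum>i\<le>m. of_nat ((m - i) choose i) * t ^ i)"

lemma S_half: "(\<Sum>i\<le>m div 2. of_nat ((m - i) choose i) * t ^ i) = S t m"
  unfolding S_def
proof (rule sum.mono_neutral_left)
  show "\<forall>i\<in>{..m} - {..m div 2}. of_nat ((m - i) choose i) * t ^ i = 0"
  proof
    fix i assume "i \<in> {..m} - {..m div 2}"
    then have "m - i < i" by auto
    then show "of_nat ((m - i) choose i) * t ^ i = 0" by (simp add: binomial_eq_0)
  qed
qed auto

lemma S_rec: "S t (n + 2) = S t (n + 1) + t * S t n"
proof -
  have A: "S t (n+2) = 1 + (\<Sum>i\<le>n+1. of_nat ((n + 1 - i) choose (i+1)) * t ^ (i+1))"
  proof -
    have "S t (n+2) = (\<Sum>i\<le>Suc (n+1). of_nat ((Suc (n+1) - i) choose i) * t ^ i)"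
      unfolding S_def by simp
    also have "\<dots> = 1 + (\<Sum>i\<le>n+1. of_nat ((n + 1 - i) choose (i+1)) * t ^ (i+1))"
      by (subst sum.atMost_Suc_shift) simp
    finally show ?thesis .
  qed
  have B: "\<And>i. i \<le> n+1 \<Longrightarrow> of_nat ((n + 1 - i) choose (i+1)) * t ^ (i+1)
     = of_nat ((n - i) choose (i+1)) * t ^ (i+1) + t * (of_nat ((n - i) choose i) * t ^ i)"
  proof -
    fix i assume "i \<le> n + 1"
    then consider "i \<le> n" | "i = n+1" by linarith
    then show "?thesis i"
    proof cases
      case 1
      then have "n + 1 - i = Suc (n - i)" by simp
      then show ?thesis by (simp add: algebra_simps)
    next
      case 2 then show ?thesis by simp
    qed
  qed
  have C: "S t (n+1) = 1 + (\<Sum>i\<le>n+1. of_nat ((n - i) choose (i+1)) * t ^ (i+1))"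
  proof -
    have "S t (n+1) = S t (n+1) + of_nat ((n+2 - (n+2)) choose (n+2)) * t^(n+2)" by simp
    also have "\<dots> = (\<Sum>i\<le>Suc (n+1). of_nat ((n + 1 - i) choose i) * t ^ i)"
      unfolding S_def by simp
    also have "\<dots> = 1 + (\<Sum>i\<le>n+1. of_nat ((n - i) choose (i+1)) * t ^ (i+1))"
      by (subst sum.atMost_Suc_shift) simp
    finally show ?thesis .
  qed
  have D: "(\<Sum>i\<le>n+1. t * (of_nat ((n - i) choose i) * t ^ i)) = t * S t n"
    unfolding S_def by (simp add: sum_distrib_left)
  have E: "(\<Sum>i\<le>n+1. of_nat ((n + 1 - i) choose (i+1)) * t ^ (i+1))
    = (\<Sum>i\<le>n+1. of_nat ((n - i) choose (i+1)) * t ^ (i+1)) + (\<Sum>i\<le>n+1. t * (of_nat ((n - i) choose i) * t ^ i))"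
    by (subst sum.distrib[symmetric]) (rule sum.cong[OF refl], rule B, simp)
  show ?thesis by (simp only: A C E D add.assoc)
qed

lemma coeff_eq:
  assumes "n \<ge> 1" "i \<le> n div 2"
  shows "D3coeff n i = int ((n - i) choose i) - (if i = 0 then 0 else 2 * int ((n - i - 1) choose (i - 1)))"
proof (cases i)
  case 0 then show ?thesis using assms by (simp add: D3coeff_def)
next
  case (Suc k)
  define N where "N = int (n - i)"
  define C where "C = int ((n - i) choose i)"
  define C' where "C' = int ((n - i - 1) choose (i - 1))"
  have pos: "N \<noteq> 0" unfolding N_def using assms by linarith
  have ab: "i * ((n - i) choose i) = (n - i) * ((n - i - 1) choose (i - 1))"
    using binomial_absorption[of k "n - i"] Suc by simp
  have ab': "int i * C = N * C'"
    unfolding C_def C'_def N_def by (metis ab of_nat_mult)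
  have nn: "int n - 3 * int i = N - 2 * int i" unfolding N_def using assms by linarith
  have num: "(int n - 3 * int i) * C = N * (C - 2 * C')"
    unfolding nn using ab' by (simp add: algebra_simps)
  have "D3coeff n i = ((int n - 3 * int i) * C) div N"
    unfolding D3coeff_def C_def N_def ..
  also have "\<dots> = C - 2 * C'" unfolding num using pos by simp
  finally show ?thesis using Suc unfolding C_def C'_def by simp
qed

lemma D3_two: "D3 (n+2) (1::'a::comm_ring_1) x = S (-x) (n+2) - 2 * (-x) * S (-x) n"
proof -
  have "D3 (n+2) (1::'a) x = (\<Sum>i\<le>(n+2) div 2. (of_nat ((n + 2 - i) choose i)
       - 2 * (if i = 0 then 0 else of_nat ((n + 2 - i - 1) choose (i - 1)))) * (-x) ^ i)"
  proof -
    have "D3 (n+2) (1::'a) x = (\<Sum>i\<le>(n+2) div 2. of_int (D3coeff (n+2) i) * (-x)^i)"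
      by (simp add: D3_def)
    also have "\<dots> = (\<Sum>i\<le>(n+2) div 2. (of_nat ((n + 2 - i) choose i)
       - 2 * (if i = 0 then 0 else of_nat ((n + 2 - i - 1) choose (i - 1)))) * (-x) ^ i)"
      by (intro sum.cong refl) (simp add: coeff_eq)
    finally show ?thesis .
  qed
  also have "\<dots> = S (-x) (n+2) - 2 * (\<Sum>i\<le>(n+2) div 2.
       (if i = 0 then 0 else of_nat ((n + 2 - i - 1) choose (i - 1))) * (-x) ^ i)"
    by (simp only: left_diff_distrib sum_subtractf sum_distrib_left mult.assoc S_half)
  also have "(\<Sum>i\<le>(n+2) div 2.
       (if i = 0 then 0 else of_nat ((n + 2 - i - 1) choose (i - 1))) * (-x) ^ i)
     = (-x) * S (-x) n"
  proof -
    have "(n+2) div 2 = Suc (n div 2)" by simp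
    then have "(\<Sum>i\<le>(n+2) div 2.
       (if i = 0 then 0 else of_nat ((n + 2 - i - 1) choose (i - 1))) * (-x) ^ i)
      = (\<Sum>i\<le>n div 2. of_nat ((n - i) choose i) * (-x) ^ (Suc i))"
      by (simp only: sum.atMost_Suc_shift) simp
    also have "\<dots> = (-x) * S (-x) n"
      by (simp add: S_half[symmetric] sum_distrib_left algebra_simps)
    finally show ?thesis .
  qed
  finally show ?thesis by simp
qed


lemma nat_cases3:
  fixes n :: nat
  obtains "n = 0" | "n = 1" | m where "n = m + 2"
proof (cases n)
  case 0 then show ?thesis using that by simp
next
  case (Suc k)
  show ?thesis
  proof (cases k)
    case 0 then show ?thesis using that Suc by simp
  next
    case (Suc j) then show ?thesis using that \<open>n = Suc k\<close> by simp
  qed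
qed

lemma D3_0: "D3 0 (1::'a::comm_ring_1) x = -1" by (simp add: D3_def)
lemma D3_1: "D3 1 (1::'a::comm_ring_1) x = 1" by (simp add: D3_def D3coeff_def)
lemma D3_1': "D3 (Suc 0) (1::'a::comm_ring_1) x = 1" by (simp add: D3_def D3coeff_def)

lemma S_0: "S t 0 = 1" by (simp add: S_def)
lemma S_1: "S t 1 = 1" by (simp add: S_def)
lemma S_1': "S t (Suc 0) = 1" by (simp add: S_def)

lemma D3_rec: "D3 (n+2) (1::'a::comm_ring_1) x = D3 (n+1) 1 x - x * D3 n 1 x"
proof -
  consider "n = 0" | "n = 1" | m where "n = m + 2" by (rule nat_cases3)
  then show ?thesis
  proof cases
    case 1
    have "S (-x) 2 = 1 - x" using S_rec[of "-x" 0] by (simp add: S_0 S_1 S_1' numeral_2_eq_2)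
    then show ?thesis using 1 D3_two[of 0 x] by (simp add: D3_0 D3_1 D3_1' S_0 algebra_simps numeral_2_eq_2)
  next
    case 2
    have s2: "S (-x) 2 = 1 - x" using S_rec[of "-x" 0] by (simp add: S_0 S_1 S_1' numeral_2_eq_2)
    have r: "S (-x) 3 = S (-x) 2 + (-x) * S (-x) 1" using S_rec[of "-x" 1] by (simp add: numeral_3_eq_3 numeral_2_eq_2)
    have "S (-x) 3 = 1 - 2 * x" unfolding r s2 S_1 by simp
    then show ?thesis using 2 D3_two[of 1 x] D3_two[of 0 x] s2 by (simp add: D3_0 D3_1 D3_1' S_0 S_1 S_1' algebra_simps numeral_2_eq_2 numeral_3_eq_3)
  next
    case 3
    have eq1: "m+1+2 = m+2+(1::nat)" by simp
    have e1: "D3 (m+2+2) (1::'a) x = S (-x) (m+2+2) - 2*(-x)*S (-x) (m+2)" by (rule D3_two)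
    have e2: "D3 (m+2+1) (1::'a) x = S (-x) (m+2+1) - 2*(-x)*S (-x) (m+1)" using D3_two[of "m+1" x] by (simp only: eq1)
    have e3: "D3 (m+2) (1::'a) x = S (-x) (m+2) - 2*(-x)*S (-x) m" by (rule D3_two)
    have r1: "S (-x) (m+2+2) = S (-x) (m+2+1) + (-x) * S (-x) (m+2)" by (rule S_rec)
    have r2: "S (-x) (m+2) = S (-x) (m+1) + (-x) * S (-x) m" by (rule S_rec)
    have "D3 (m+2+2) (1::'a) x = D3 (m+2+1) 1 x - x * D3 (m+2) 1 x"
      unfolding e1 e2 e3 r1 unfolding r2 by (simp add: algebra_simps)
    then show ?thesis using 3 by simp
  qed
qed

lemma seq_eq:
  fixes g h :: "nat \<Rightarrow> 'a::comm_ring_1"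
  assumes "\<And>n. g (n+2) = g (n+1) - x * g n" "\<And>n. h (n+2) = h (n+1) - x * h n"
    "g 0 = h 0" "g 1 = h 1"
  shows "g n = h n"
proof (induction n rule: less_induct)
  case (less n)
  consider "n = 0" | "n = 1" | m where "n = m + 2" by (rule nat_cases3)
  then show ?case
  proof cases
    case 3
    then show ?thesis using less[of m] less[of "m+1"] assms(1,2)[of m] by simp
  qed (use assms in auto)
qed

lemma part1a:
  assumes two: "(2::'a::field) \<noteq> 0"
  shows "D3 n (1::'a) (1/4) = of_int (3 * int n - 1) / 2 ^ n"
proof (rule seq_eq[where x = "1/4"])
  show "\<And>n. D3 (n + 2) (1::'a) (1/4) = D3 (n + 1) 1 (1/4) - 1/4 * D3 n 1 (1/4)" by (rule D3_rec)
  fix n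
  show "of_int (3 * int (n + 2) - 1) / 2 ^ (n + 2) =
        of_int (3 * int (n + 1) - 1) / 2 ^ (n + 1) - 1/4 * (of_int (3 * int n - 1) / (2::'a) ^ n)"
  proof -
    have p: "(2::'a) ^ n \<noteq> 0" using two by simp
    have f: "(4::'a) = 2 * 2" by simp
    have four: "(4::'a) \<noteq> 0" using two f by (metis no_zero_divisors)
    have "(8::'a) = 2 * 4" by simp
    then have eight: "(8::'a) \<noteq> 0" using two four by (metis no_zero_divisors)
    show ?thesis using two p four eight by (simp add: field_simps)
  qed
qed (use two in \<open>simp_all add: D3_0 D3_1 D3_1'\<close>)

lemma part1b:
  assumes "(y::'a::field) \<noteq> 1/2" "(2::'a) \<noteq> 0"
  shows "D3 n 1 (y * (1 - y)) = ((2 - y) * y ^ n - (y + 1) * (1 - y) ^ n) / (2 * y - 1)"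
proof -
  have nz: "2 * y - 1 \<noteq> 0" using assms by (auto simp: field_simps)
  show ?thesis
  proof (rule seq_eq[where x = "y * (1 - y)"])
    show "\<And>n. D3 (n + 2) (1::'a) (y * (1 - y)) = D3 (n + 1) 1 (y * (1 - y)) - y * (1 - y) * D3 n 1 (y * (1 - y))" by (rule D3_rec)
    fix n
    show "((2 - y) * y ^ (n + 2) - (y + 1) * (1 - y) ^ (n + 2)) / (2 * y - 1) =
      ((2 - y) * y ^ (n + 1) - (y + 1) * (1 - y) ^ (n + 1)) / (2 * y - 1) -
      y * (1 - y) * (((2 - y) * y ^ n - (y + 1) * (1 - y) ^ n) / (2 * y - 1))"
    proof -
      have h: "\<And>a b. ((2-y)*(a*y*y) - (y+1)*(b*(1-y)*(1-y)))/(2*y-1) = ((2-y)*(a*y) - (y+1)*(b*(1-y)))/(2*y-1) - y*(1-y)*(((2-y)*a - (y+1)*b)/(2*y-1))"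
        using nz by (simp add: divide_simps) algebra
      show ?thesis using h[of "y^n" "(1-y)^n"] by (simp add: power_add ac_simps)
    qed
  qed (use nz in \<open>simp_all add: D3_0 D3_1 D3_1' field_simps\<close>)
qed


lemma fermat_ff:
  fixes z :: "'a::{field,finite}"
  assumes "z \<noteq> 0"
  shows "z ^ (card (UNIV::'a set) - 1) = 1"
proof -
  define G where "G = UNIV - {0::'a}"
  have fin: "finite G" by simp
  have inj: "inj_on (\<lambda>w. z * w) G" using assms by (auto simp: inj_on_def)
  have img: "(\<lambda>w. z * w) ` G = G"
  proof
    show "(\<lambda>w. z * w) ` G \<subseteq> G" using assms by (auto simp: G_def)
    show "G \<subseteq> (\<lambda>w. z * w) ` G"
    proof
      fix w assume "w \<in> G"
      then have "w = z * (w / z)" "w / z \<in> G" using assms by (auto simp: G_def)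
      then show "w \<in> (\<lambda>w. z * w) ` G" by blast
    qed
  qed
  have "prod (\<lambda>w. w) G = prod (\<lambda>w. w) ((\<lambda>w. z * w) ` G)" using img by simp
  also have "\<dots> = prod (\<lambda>w. z * w) G" by (rule prod.reindex[OF inj, unfolded comp_def])
  also have "\<dots> = z ^ card G * prod (\<lambda>w. w) G" by (simp add: prod.distrib)
  finally have "z ^ card G * prod (\<lambda>w. w) G = 1 * prod (\<lambda>w. w) G" by simp
  moreover have "prod (\<lambda>w. w) G \<noteq> 0" by (simp add: G_def)
  ultimately have "z ^ card G = 1" by (metis mult_cancel_right)
  moreover have "card G = card (UNIV::'a set) - 1" by (simp add: G_def card_Diff_singleton)
  ultimately show ?thesis by simp
qed

lemma pow_cong_ff:
  fixes z :: "'a::{field,finite}"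
  assumes "n1 > 0" "n2 > 0" "[n1 = n2] (mod (card (UNIV::'a set) - 1))"
  shows "z ^ n1 = z ^ n2"
proof (cases "z = 0")
  case True then show ?thesis using assms by (simp add: zero_power)
next
  case False
  define m where "m = card (UNIV::'a set) - 1"
  have zm: "z ^ m = 1" using fermat_ff[OF False] by (simp add: m_def)
  have red: "z ^ k = z ^ (k mod m)" for k
  proof -
    have "z ^ k = z ^ (m * (k div m) + k mod m)" by simp
    also have "\<dots> = (z ^ m) ^ (k div m) * z ^ (k mod m)" by (simp only: power_add power_mult)
    finally show ?thesis using zm by simp
  qed
  have "n1 mod m = n2 mod m" using assms(3) by (simp add: m_def cong_def)
  then show ?thesis using red[of n1] red[of n2] by simp
qed

lemma char_card_ff: "of_nat (card (UNIV::'a::{field,finite} set)) = (0::'a)"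
proof -
  have "sum (\<lambda>z. z) (UNIV::'a set) = sum (\<lambda>z. z + 1) UNIV"
    by (rule sum.reindex_bij_witness[where j = "\<lambda>z. z - 1" and i = "\<lambda>z. z + 1"]) auto
  also have "\<dots> = sum (\<lambda>z. z) UNIV + of_nat (card (UNIV::'a set))"
    by (simp add: sum.distrib)
  finally show ?thesis by simp
qed

lemma frob_p:
  fixes a b :: "'a::comm_ring_1"
  assumes "prime p" "of_nat p = (0::'a)"
  shows "(a + b) ^ p = a ^ p + b ^ p"
proof -
  have p0: "p > 0" using assms(1) prime_gt_0_nat by blast
  have t: "of_nat (p choose k) * a ^ k * b ^ (p - k) =
      (if k = 0 then b ^ p else 0) + (if k = p then a ^ p else 0)" if "k \<le> p" for k
  proof -
    consider "k = 0" | "k = p" | "0 < k" "k < p" using \<open>k \<le> p\<close> by linarith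
    then show ?thesis
    proof cases
      case 3
      then have "p dvd (p choose k)" using dvd_choose_prime[of k p] assms(1) by auto
      then obtain c where "p choose k = p * c" by blast
      then have "(of_nat (p choose k) :: 'a) = 0" using assms(2) by simp
      then show ?thesis using 3 by simp
    qed (use p0 in auto)
  qed
  have "(a + b) ^ p = (\<Sum>k\<le>p. of_nat (p choose k) * a ^ k * b ^ (p - k))"
    by (rule binomial_ring)
  also have "\<dots> = (\<Sum>k\<le>p. (if k = 0 then b ^ p else 0) + (if k = p then a ^ p else 0))"
    by (rule sum.cong) (auto simp: t)
  also have "\<dots> = b ^ p + a ^ p" by (simp add: sum.distrib)
  finally show ?thesis by simp
qed

lemma frob_q:
  fixes a b :: "'a::comm_ring_1"
  assumes "prime p" "of_nat p = (0::'a)"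
  shows "(a + b) ^ (p ^ e) = a ^ (p ^ e) + b ^ (p ^ e)"
proof (induction e arbitrary: a b)
  case 0 then show ?case by simp
next
  case (Suc e)
  have "(a + b) ^ (p ^ Suc e) = ((a + b) ^ p) ^ (p ^ e)" by (simp add: power_mult)
  also have "\<dots> = (a ^ p + b ^ p) ^ (p ^ e)" using frob_p[OF assms] by simp
  also have "\<dots> = (a ^ p) ^ (p ^ e) + (b ^ p) ^ (p ^ e)" by (rule Suc.IH)
  finally show ?case by (simp add: power_mult)
qed

lemma frob_nat:
  fixes q :: nat
  assumes "\<And>a b :: 'a::comm_ring_1. (a + b) ^ q = a ^ q + b ^ q" "q > 0"
  shows "(of_nat m :: 'a) ^ q = of_nat m"
proof (induction m)
  case 0 then show ?case using assms(2) by (simp add: zero_power)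
next
  case (Suc m)
  then show ?case using assms(1)[of "of_nat m" 1] by (simp add: add.commute)
qed


lemma squares_ff:
  fixes d :: "'a::{field,finite}"
  assumes odd: "odd (card (UNIV::'a set))" and gt: "card (UNIV::'a set) > 1"
    and "d \<noteq> 0" and dh: "d ^ ((card (UNIV::'a set) - 1) div 2) = 1"
  shows "\<exists>s. s ^ 2 = d"
proof -
  define Q where "Q = card (UNIV::'a set)"
  define h where "h = (Q - 1) div 2"
  have Qh: "Q - 1 = 2 * h" using odd gt unfolding h_def Q_def by (auto elim: oddE)
  have h1: "h \<ge> 1" using Qh odd gt unfolding Q_def by (auto elim!: oddE)
  define G where "G = UNIV - {0::'a}"
  define Sq where "Sq = (\<lambda>z. z ^ 2) ` G"
  define R where "R = {w::'a. w ^ h = 1}"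
  have SqR: "Sq \<subseteq> R"
  proof
    fix w assume "w \<in> Sq"
    then obtain z where z: "z \<noteq> 0" "w = z ^ 2" unfolding Sq_def G_def by auto
    have "w ^ h = z ^ (Q - 1)" using Qh z by (simp add: power_mult)
    also have "\<dots> = 1" using fermat_ff[OF z(1)] by (simp add: Q_def)
    finally show "w \<in> R" by (simp add: R_def)
  qed
  define P where "P = monom (1::'a) h - [:1:]"
  have polyP: "poly P w = w ^ h - 1" for w by (simp add: P_def poly_monom)
  have Pnz: "P \<noteq> 0"
  proof
    assume "P = 0"
    then have "poly P 0 = 0" by simp
    then show False using h1 by (simp add: polyP zero_power)
  qed
  have degP: "degree P \<le> h" unfolding P_def by (intro degree_diff_le degree_monom_le) simp
  have "R = {w. poly P w = 0}" by (simp add: R_def polyP)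
  then have cardR: "card R \<le> h" using card_poly_roots_bound[OF Pnz] degP by simp
  have "G \<subseteq> (\<Union>w\<in>Sq. {z. z ^ 2 = w})" unfolding Sq_def by auto
  then have "card G \<le> card (\<Union>w\<in>Sq. {z. z ^ 2 = w})" by (intro card_mono) auto
  also have "\<dots> \<le> (\<Sum>w\<in>Sq. card {z. z ^ 2 = w})" by (rule card_UN_le) simp
  also have "\<dots> \<le> (\<Sum>w\<in>Sq. 2)"
  proof (rule sum_mono)
    fix w assume "w \<in> Sq"
    then obtain s where "w = s ^ 2" unfolding Sq_def by auto
    then have "{z. z ^ 2 = w} = {s, -s}" by (auto simp: power2_eq_iff)
    then show "card {z. z ^ 2 = w} \<le> 2" by (simp add: card_insert_if)
  qed
  finally have "card G \<le> 2 * card Sq" by simp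
  moreover have "card G = Q - 1" by (simp add: G_def Q_def card_Diff_singleton)
  ultimately have "h \<le> card Sq" using Qh by simp
  then have "card Sq = card R" using cardR card_mono[OF _ SqR] by simp
  then have "Sq = R" using SqR by (intro card_subset_eq) auto
  moreover have "d \<in> R" using dh by (simp add: R_def h_def Q_def)
  ultimately have "d \<in> Sq" by simp
  then show ?thesis unfolding Sq_def by auto
qed

theorem theorem2p4:
  fixes p e q :: nat
  assumes "prime p" and "p > 3" and "e \<ge> 1" and "q = p ^ e"
    and "card (UNIV :: 'a::{field,finite} set) = q ^ 2"
  shows "(\<forall>n::nat. D3 n (1::'a) (1/4) = of_int (3 * int n - 1) / 2 ^ n)
       \<and> (\<forall>n::nat. \<forall>y::'a. y \<noteq> 1/2 \<longrightarrow>
            D3 n 1 (y * (1 - y)) = ((2 - y) * y ^ n - (y + 1) * (1 - y) ^ n) / (2 * y - 1))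
       \<and> (\<forall>n1 n2 :: nat. \<forall>x0::'a. n1 > 0 \<longrightarrow> n2 > 0 \<longrightarrow> [n1 = n2] (mod (q ^ 2 - 1))
            \<longrightarrow> x0 ^ q = x0 \<longrightarrow> x0 \<noteq> 1/4 \<longrightarrow> D3 n1 1 x0 = D3 n2 1 x0)"
proof -
  note pr = assms(1)
  have podd: "odd p" using prime_odd_nat[OF pr] assms(2) by simp
  have "of_nat (card (UNIV::'a set)) = (0::'a)" by (rule char_card_ff)
  then have "of_nat (q ^ 2) = (0::'a)" unfolding assms(5) .
  then have "(of_nat p :: 'a) ^ (e * 2) = 0" using assms(4) by (simp add: power_mult)
  then have charp: "(of_nat p :: 'a) = 0" by simp
  have two: "(2::'a) \<noteq> 0"
  proof
    assume t: "(2::'a) = 0"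
    obtain k where "p = 2 * k + 1" using podd by (auto elim: oddE)
    then have "(of_nat p :: 'a) = 2 * of_nat k + 1" by simp
    then show False using t charp by simp
  qed
  have f22: "(4::'a) = 2 * 2" by simp
  have four: "(4::'a) \<noteq> 0" using two f22 by (metis no_zero_divisors)
  have qodd: "odd q" using podd assms(4) by simp
  have qpos: "q > 0" using qodd by (cases q) auto
  have frob: "(a + b) ^ q = a ^ q + b ^ q" for a b :: 'a using frob_q[OF pr charp] assms(4) by simp
  show ?thesis
  proof (intro conjI allI impI)
    fix n show "D3 n (1::'a) (1/4) = of_int (3 * int n - 1) / 2 ^ n" by (rule part1a[OF two])
  next
    fix n and y :: 'a assume "y \<noteq> 1/2"
    then show "D3 n 1 (y * (1 - y)) = ((2 - y) * y ^ n - (y + 1) * (1 - y) ^ n) / (2 * y - 1)"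
      by (rule part1b[OF _ two])
  next
    fix n1 n2 :: nat and x0 :: 'a
    assume n1: "n1 > 0" and n2: "n2 > 0" and cg: "[n1 = n2] (mod (q ^ 2 - 1))"
      and xq: "x0 ^ q = x0" and x4: "x0 \<noteq> 1/4"
    define d where "d = 1 - 4 * x0"
    have dnz: "d \<noteq> 0"
    proof
      assume "d = 0"
      then have "x0 = 1/4" using four unfolding d_def by (simp add: field_simps)
      then show False using x4 by simp
    qed
    have f4: "(4::'a) ^ q = 4" using frob_nat[of q 4, OF frob qpos] by simp
    have "d ^ q = 1 ^ q + (- (4 * x0)) ^ q" unfolding d_def using frob[of 1 "- (4 * x0)"] by simp
    also have "\<dots> = d" using qodd f4 xq by (simp add: d_def power_mult_distrib)
    finally have dq: "d ^ q = d" .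
    have dq1: "d ^ (q - 1) = 1"
    proof -
      have "d ^ q = d * d ^ (q - 1)" using qpos by (cases q) auto
      then have "d * d ^ (q - 1) = d * 1" using dq by simp
      then show ?thesis using dnz by simp
    qed
    obtain r where r: "q = 2 * r + 1" using qodd by (auto elim: oddE)
    have hq: "(q ^ 2 - 1) div 2 = (q - 1) * ((q + 1) div 2)"
    proof -
      have "q ^ 2 - 1 = 2 * (2 * r * r + 2 * r)" using r by (simp add: power2_eq_square algebra_simps)
      moreover have "(q - 1) * ((q + 1) div 2) = 2 * r * (r + 1)" using r by simp
      ultimately show ?thesis by (simp add: algebra_simps)
    qed
    have dh: "d ^ ((card (UNIV::'a set) - 1) div 2) = 1"
      unfolding assms(5) hq power_mult dq1 by simp
    have Qodd: "odd (card (UNIV::'a set))" using assms(5) qodd by simp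
    have Qgt: "card (UNIV::'a set) > 1"
    proof -
      have "p ^ 1 \<le> p ^ e" using assms(2,3) by (intro power_increasing) auto
      then have q1: "q > 1" using assms(2,4) by simp
      show ?thesis unfolding assms(5) using one_less_power[OF q1, of 2] by simp
    qed
    obtain s where s: "s ^ 2 = d" using squares_ff[OF Qodd Qgt dnz dh] by blast
    define y where "y = (1 + s) / 2"
    have snz: "s \<noteq> 0" using s dnz by auto
    have yh: "y \<noteq> 1/2" using snz two unfolding y_def by (auto simp: field_simps)
    have xy: "x0 = y * (1 - y)"
    proof -
      have "y * (1 - y) = ((1 + s) * (2 - (1 + s))) / (2 * 2)" using two unfolding y_def
        by (simp add: divide_simps)
      also have "\<dots> = (1 - s ^ 2) / 4" by (simp add: power2_eq_square algebra_simps)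
      also have "\<dots> = x0" using four unfolding s d_def by (simp add: field_simps)
      finally show ?thesis by simp
    qed
    have cg': "[n1 = n2] (mod (card (UNIV::'a set) - 1))" using cg assms(5) by simp
    show "D3 n1 1 x0 = D3 n2 1 x0"
      unfolding xy part1b[OF yh two]
      using pow_cong_ff[OF n1 n2 cg', of y] pow_cong_ff[OF n1 n2 cg', of "1 - y"] by simp
  qed
qed

end
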